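(* Let $n\ge 3$, $1\le k\le n/2$, and let $F_1$ be a Minkowski norm on $\mathbb{R}^n$ invariant under the standard block diagonal action of $SO(k)\times SO(n-k)$, with Hessian metric $g_1$ and $E_1=\tfrac12F_1^2$. Let $V'=\mathrm{span}(e_1,\dots,e_k)$, $V''=\mathrm{span}(e_{k+1},\dots,e_n)$, and define $f(t)=E_1(\cos t\, e_1+\sin t\, e_{k+1})$ for $t\in\mathbb{R}$. Let $y=y_1e_1+y_{k+1}e_{k+1}\ne0$ with $y_1\ge0$, $y_{k+1}\ge 0$. Consider the conditions: (1) there exist $v'\in V'$, $v''\in V''$ with $g_1|_y(v',v'')\neq 0$; (2) $g_1|_y(e_1,e_{k+1})\ne 0$; (3) $y_{k+1}>0$, additionally $y_1>0$ when $k>1$, and the angle $t\in(0,\pi)$ with $y_1=|y|\cos t$, $y_{k+1}=|y|\sin t$ satisfies $-\cos t\sin t\, f''(t)+(\cos^2t-\sin^2t)f'(t)\ne 0$. Then (1) implies $y_{k+1}>0$ and, if $k>1$, $y_1>0$; and (1), (2), (3) are equivalent. Furthermore, if (1) holds then $F_1$ is not Euclidean on any conic open neighborhood of $y$ (i.e. does not coincide there with the square root of a positive definite quadratic form).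
   Context: A Minkowski norm on $\mathbb{R}^n$ is a continuous function $F:\mathbb{R}^n\to\mathbb{R}_{\ge 0}$, smooth and positive on $\mathbb{R}^n\setminus\{0\}$, positively $1$-homogeneous, such that the Hessian of $E=\tfrac12F^2$ is positive definite on $\mathbb{R}^n\setminus\{0\}$; its Hessian metric is $g=\mathrm{d}^2E$. The standard block diagonal action is left multiplication by $\mathrm{diag}(A',A'')$, $A'\in SO(k)$, $A''\in SO(n-k)$. $|y|$ denotes the Euclidean norm; $e_i$ the standard basis vectors. *)

theory Defs
  imports "HOL-Analysis.Analysis"
begin

definition dir_deriv :: "'a::euclidean_space \<Rightarrow> ('a \<Rightarrow> real) \<Rightarrow> 'a \<Rightarrow> real" where
  "dir_deriv v h x = deriv (\<lambda>t. h (x + t *\<^sub>R v)) 0"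

fun iter_dd :: "'a::euclidean_space list \<Rightarrow> ('a \<Rightarrow> real) \<Rightarrow> 'a \<Rightarrow> real" where
  "iter_dd [] h = h"
| "iter_dd (v # vs) h = dir_deriv v (iter_dd vs h)"

definition smooth_on :: "'a::euclidean_space set \<Rightarrow> ('a \<Rightarrow> real) \<Rightarrow> bool" where
  "smooth_on U h \<longleftrightarrow>
     (\<forall>vs. continuous_on U (iter_dd vs h) \<and>
        (\<forall>v. \<forall>x\<in>U. (\<lambda>t. iter_dd vs h (x + t *\<^sub>R v)) differentiable (at 0)))"

definition energy :: "('a::euclidean_space \<Rightarrow> real) \<Rightarrow> 'a \<Rightarrow> real" where
  "energy F y = (F y)\<^sup>2 / 2"

definition hess_metric :: "('a::euclidean_space \<Rightarrow> real) \<Rightarrow> 'a \<Rightarrow> 'a \<Rightarrow> 'a \<Rightarrow> real" where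
  "hess_metric F y u v = dir_deriv u (dir_deriv v (energy F)) y"

definition minkowski_norm :: "('a::euclidean_space \<Rightarrow> real) \<Rightarrow> bool" where
  "minkowski_norm F \<longleftrightarrow>
     continuous_on UNIV F \<and> (\<forall>y. F y \<ge> 0) \<and>
     smooth_on (UNIV - {0}) F \<and> (\<forall>y. y \<noteq> 0 \<longrightarrow> F y > 0) \<and>
     (\<forall>y c. c > 0 \<longrightarrow> F (c *\<^sub>R y) = c * F y) \<and>
     (\<forall>y v. y \<noteq> 0 \<longrightarrow> v \<noteq> 0 \<longrightarrow> hess_metric F y v v > 0)"

text \<open>R^n = R^k x R^(n-k) with index type 'k + 'm; block diagonal matrix diag(A',A'').\<close>
definition blockdiag :: "real^'k^'k \<Rightarrow> real^'m^'m \<Rightarrow> real^('k::finite + 'm::finite)^('k + 'm)" where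
  "blockdiag A B = (\<chi> i j. case (i, j) of
        (Inl a, Inl b) \<Rightarrow> A $ a $ b
      | (Inr a, Inr b) \<Rightarrow> B $ a $ b
      | _ \<Rightarrow> 0)"

definition SO_invariant :: "(real^('k::finite + 'm::finite) \<Rightarrow> real) \<Rightarrow> bool" where
  "SO_invariant F \<longleftrightarrow>
     (\<forall>(A :: real^'k^'k) (B :: real^'m^'m) y.
        orthogonal_matrix A \<and> det A = 1 \<and> orthogonal_matrix B \<and> det B = 1 \<longrightarrow>
        F (blockdiag A B *v y) = F y)"

definition pos_conic :: "'a::real_vector set \<Rightarrow> bool" where
  "pos_conic U \<longleftrightarrow> (\<forall>z\<in>U. \<forall>c::real. c > 0 \<longrightarrow> c *\<^sub>R z \<in> U)"

definition euclidean_on :: "(real^'n::finite \<Rightarrow> real) \<Rightarrow> (real^'n) set \<Rightarrow> bool" where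
  "euclidean_on F U \<longleftrightarrow>
     (\<exists>Q :: real^'n^'n. transpose Q = Q \<and> (\<forall>z. z \<noteq> 0 \<longrightarrow> z \<bullet> (Q *v z) > 0) \<and>
        (\<forall>z\<in>U. F z = sqrt (z \<bullet> (Q *v z))))"

end

theory Submission
  imports Defs
begin


lemma iter_dd_append: "iter_dd (vs @ [w]) h = iter_dd vs (dir_deriv w h)"
  by (induction vs) auto

lemma smooth_shift: "smooth_on U h \<Longrightarrow> smooth_on U (dir_deriv w h)"
  unfolding smooth_on_def by (metis iter_dd_append)

lemma line_deriv0:
  assumes "(\<lambda>t. h (x + t *\<^sub>R v)) differentiable (at 0)"
  shows "((\<lambda>t. h (x + t *\<^sub>R v)) has_real_derivative dir_deriv v h x) (at 0)"
  using assms unfolding dir_deriv_def by (simp add: DERIV_deriv_iff_real_differentiable)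

lemma line_deriv_at:
  assumes "(\<lambda>s. h (x + t *\<^sub>R v + s *\<^sub>R v)) differentiable (at 0)"
  shows "((\<lambda>s. h (x + s *\<^sub>R v)) has_real_derivative dir_deriv v h (x + t *\<^sub>R v)) (at t)"
proof -
  have "((\<lambda>s. h (x + t *\<^sub>R v + s *\<^sub>R v)) has_real_derivative dir_deriv v h (x + t *\<^sub>R v)) (at (t + -t))"
    using line_deriv0[OF assms] by simp
  then have "((\<lambda>s. h (x + t *\<^sub>R v + (s + -t) *\<^sub>R v)) has_real_derivative dir_deriv v h (x + t *\<^sub>R v)) (at t)"
    by (subst (asm) DERIV_shift) 
  moreover have "(\<lambda>s. h (x + t *\<^sub>R v + (s + -t) *\<^sub>R v)) = (\<lambda>s. h (x + s *\<^sub>R v))"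
    by (rule ext) (simp add: algebra_simps)
  ultimately show ?thesis by simp
qed

lemma frechet_dir:
  assumes "(h has_derivative L) (at x)"
  shows "((\<lambda>t. h (x + t *\<^sub>R v)) has_real_derivative L v) (at 0)"
    and "dir_deriv v h x = L v"
proof -
  have l: "((\<lambda>t. x + t *\<^sub>R v) has_derivative (\<lambda>t. t *\<^sub>R v)) (at 0)"
    by (auto intro!: derivative_eq_intros)
  have "((h \<circ> (\<lambda>t. x + t *\<^sub>R v)) has_derivative (L \<circ> (\<lambda>t. t *\<^sub>R v))) (at 0)"
    by (rule diff_chain_at[OF l]) (simp add: assms)
  moreover have "L \<circ> (\<lambda>t. t *\<^sub>R v) = (*) (L v)"
    using linear_scale[OF bounded_linear.linear[OF has_derivative_bounded_linear[OF assms]]]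
    by (auto simp: fun_eq_iff)
  ultimately show d: "((\<lambda>t. h (x + t *\<^sub>R v)) has_real_derivative L v) (at 0)"
    by (simp add: has_field_derivative_def o_def)
  then show "dir_deriv v h x = L v"
    unfolding dir_deriv_def using DERIV_imp_deriv by blast
qed

lemma mvt_line:
  fixes g :: "real \<Rightarrow> real"
  assumes "\<And>t. t \<in> closed_segment 0 a \<Longrightarrow> (g has_real_derivative g' t) (at t)"
  shows "\<exists>t\<in>closed_segment 0 a. g a - g 0 = a * g' t"
proof (cases "0 \<le> a")
  case True
  have "\<exists>t\<in>{0..a}. g a - g 0 = (\<lambda>x. g' t * x) (a - 0)"
  proof (rule mvt_very_simple[OF True])
    fix x assume "0 \<le> x" "x \<le> a"
    then have "(g has_real_derivative g' x) (at x)" using assms True by (simp add: closed_segment_eq_real_ivl)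
    then show "(g has_derivative (\<lambda>y. g' x * y)) (at x within {0..a})"
      using has_derivative_at_withinI has_field_derivative_imp_has_derivative by blast
  qed
  then obtain t where "t \<in> {0..a}" "g a - g 0 = g' t * (a - 0)" by blast
  then show ?thesis using True by (intro bexI[of _ t]) (auto simp: closed_segment_eq_real_ivl algebra_simps)
next
  case False
  have "\<exists>t\<in>{a..0}. g 0 - g a = (\<lambda>x. g' t * x) (0 - a)"
  proof (rule mvt_very_simple)
    show "a \<le> 0" using False by simp
    fix x assume "a \<le> x" "x \<le> 0"
    then have "(g has_real_derivative g' x) (at x)" using assms False by (simp add: closed_segment_eq_real_ivl)
    then show "(g has_derivative (\<lambda>y. g' x * y)) (at x within {a..0})"
      using has_derivative_at_withinI has_field_derivative_imp_has_derivative by blast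
  qed
  then obtain t where "t \<in> {a..0}" "g 0 - g a = g' t * (0 - a)" by blast
  then show ?thesis using False by (intro bexI[of _ t]) (auto simp: closed_segment_eq_real_ivl algebra_simps)
qed




lemma vS_nth:
  fixes v :: "real^'n"
  assumes "finite S"
  shows "(\<Sum>j\<in>S. v$j *\<^sub>R axis j (1::real)) $ l = (if l \<in> S then v$l else 0)"
  using assms by (simp add: sum_component axis_def if_distrib cong: if_cong)

lemma sum_delta_mult:
  fixes f :: "'a \<Rightarrow> real"
  assumes "finite S"
  shows "(\<Sum>x\<in>S. f x * (if l = x then 1 else 0)) = (if l \<in> S then f l else 0)"
proof -
  have "(\<Sum>x\<in>S. f x * (if l = x then 1 else 0)) = (\<Sum>x\<in>S. if l = x then f x else 0)"
    by (rule sum.cong) auto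
  also have "\<dots> = (if l \<in> S then f l else 0)" using assms by simp
  finally show ?thesis .
qed

lemma partials_frechet:
  fixes h :: "real^'n \<Rightarrow> real"
  assumes U: "open U" "x \<in> U"
   and line: "\<And>p v. p \<in> U \<Longrightarrow> (\<lambda>t. h (p + t *\<^sub>R v)) differentiable (at 0)"
   and cont: "\<And>i. continuous_on U (dir_deriv (axis i 1) h)"
  shows "(h has_derivative (\<lambda>v. \<Sum>i\<in>UNIV. v$i * dir_deriv (axis i 1) h x)) (at x)"
proof -
  define D where "D = (\<lambda>i. dir_deriv (axis i (1::real)) h)"
  define L where "L = (\<lambda>v::real^'n. \<Sum>i\<in>UNIV. v$i * D i x)"
  have lin: "bounded_linear L"
    unfolding L_def
    apply (intro bounded_linear_sum)
    subgoal for i using bounded_linear_compose[OF bounded_linear_mult_left bounded_linear_vec_nth[of i], of "D i x"] by simp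
    done
  have main: "\<exists>d>0. \<forall>y\<in>UNIV. norm (y - x) < d \<longrightarrow> norm (h y - h x - L (y - x)) \<le> e * norm (y - x)"
    if e: "e > 0" for e
  proof -
    define c where "c = e / real CARD('n)"
    have c: "c > 0" using e by (simp add: c_def)
    obtain r where r: "r > 0" "ball x r \<subseteq> U" using U open_contains_ball by blast
    have "\<forall>i. \<exists>d>0. \<forall>p\<in>U. dist p x < d \<longrightarrow> dist (D i p) (D i x) < c"
      using cont U c unfolding D_def continuous_on_iff by blast
    then obtain d where d: "\<And>i. d i > 0" "\<And>i p. p\<in>U \<Longrightarrow> dist p x < d i \<Longrightarrow> dist (D i p) (D i x) < c"
      by metis
    define \<delta> where "\<delta> = min r (Min (range d))"
    have dpos: "\<delta> > 0" using d(1) r(1) by (simp add: \<delta>_def)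
    have dle: "\<delta> \<le> d i" for i unfolding \<delta>_def by (simp add: min.coboundedI2)
    have claim: "\<bar>h (x + (\<Sum>j\<in>S. v$j *\<^sub>R axis j 1)) - h x - (\<Sum>j\<in>S. v$j * D j x)\<bar> \<le> c * card S * norm v"
      if nv: "norm v < \<delta>" for v :: "real^'n" and S :: "'n set"
    proof -
      have "finite S" by simp
      then show ?thesis
      proof (induction S rule: finite_induct)
        case empty
        then show ?case by simp
      next
        case (insert i S)
        define p where "p = x + (\<Sum>j\<in>S. v$j *\<^sub>R axis j (1::real))"
        define g where "g = (\<lambda>t. h (p + t *\<^sub>R axis i (1::real)))"
        have inball: "norm (p + t *\<^sub>R axis i 1 - x) \<le> norm v" if t: "t \<in> closed_segment 0 (v$i)" for t
        proof -
          have tb: "\<bar>t\<bar> \<le> \<bar>v$i\<bar>" using t by (auto simp: closed_segment_eq_real_ivl split: if_splits)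
          show ?thesis
            unfolding p_def
            apply (rule norm_le_componentwise_cart)
            using insert.hyps tb by (auto simp: axis_def sum_delta_mult)
        qed
        have inU: "p + t *\<^sub>R axis i 1 \<in> U" "dist (p + t *\<^sub>R axis i 1) x < d i"
          if t: "t \<in> closed_segment 0 (v$i)" for t
        proof -
          have "norm (p + t *\<^sub>R axis i 1 - x) < \<delta>" using inball[OF t] nv by linarith
          then show "p + t *\<^sub>R axis i 1 \<in> U" "dist (p + t *\<^sub>R axis i 1) x < d i"
            using r dle[of i] unfolding \<delta>_def
            by (auto simp: dist_norm norm_minus_commute)
        qed
        have gd: "(g has_real_derivative D i (p + t *\<^sub>R axis i 1)) (at t)"
          if t: "t \<in> closed_segment 0 (v$i)" for t
          unfolding g_def D_def by (rule line_deriv_at) (rule line[OF inU(1)[OF t]])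
        obtain \<xi> where xi: "\<xi> \<in> closed_segment 0 (v$i)" "g (v$i) - g 0 = v$i * D i (p + \<xi> *\<^sub>R axis i 1)"
          using mvt_line[of "v$i" g "\<lambda>t. D i (p + t *\<^sub>R axis i 1)", OF gd] by blast
        have lt: "\<bar>D i (p + \<xi> *\<^sub>R axis i 1) - D i x\<bar> < c"
          using d(2)[OF inU[OF xi(1)]] by (simp add: dist_real_def)
        have "g (v$i) - g 0 - v$i * D i x = v$i * (D i (p + \<xi> *\<^sub>R axis i 1) - D i x)"
          using xi(2) by (simp add: algebra_simps)
        then have "\<bar>g (v$i) - g 0 - v$i * D i x\<bar> = \<bar>v$i\<bar> * \<bar>D i (p + \<xi> *\<^sub>R axis i 1) - D i x\<bar>"
          by (simp add: abs_mult)
        also have "\<dots> \<le> norm v * c"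
          by (rule mult_mono) (use component_le_norm_cart[of v i] lt in auto)
        finally have step: "\<bar>g (v$i) - g 0 - v$i * D i x\<bar> \<le> c * norm v"
          by (simp add: mult.commute)
        have e1: "h (x + (\<Sum>j\<in>insert i S. v$j *\<^sub>R axis j 1)) = g (v$i)"
          using insert.hyps by (simp add: g_def p_def algebra_simps)
        have e2: "h (x + (\<Sum>j\<in>S. v$j *\<^sub>R axis j 1)) = g 0"
          by (simp add: g_def p_def)
        have "\<bar>h (x + (\<Sum>j\<in>insert i S. v$j *\<^sub>R axis j 1)) - h x - (\<Sum>j\<in>insert i S. v$j * D j x)\<bar>
            = \<bar>(g (v$i) - g 0 - v$i * D i x) + (h (x + (\<Sum>j\<in>S. v$j *\<^sub>R axis j 1)) - h x - (\<Sum>j\<in>S. v$j * D j x))\<bar>"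
          using insert.hyps e1 e2 by simp
        also have "\<dots> \<le> c * norm v + c * card S * norm v"
          using step insert.IH by linarith
        also have "\<dots> = c * card (insert i S) * norm v"
          using insert.hyps by (simp add: algebra_simps)
        finally show ?case .
      qed
    qed
    show ?thesis
    proof (intro exI[of _ \<delta>] conjI ballI impI dpos)
      fix y :: "real^'n" assume "norm (y - x) < \<delta>"
      from claim[OF this, of UNIV]
      have "\<bar>h (x + (y - x)) - h x - L (y - x)\<bar> \<le> c * CARD('n) * norm (y - x)"
        using basis_expansion[of "y - x"] by (simp add: L_def scalar_mult_eq_scaleR)
      then show "norm (h y - h x - L (y - x)) \<le> e * norm (y - x)"
        by (simp add: c_def)
    qed
  qed
  have "(h has_derivative L) (at x)"
    unfolding has_derivative_within_alt using lin main by blast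
  then show ?thesis unfolding L_def D_def .
qed



lemma smooth_frechet:
  fixes h :: "real^'n \<Rightarrow> real"
  assumes "smooth_on U h" "open U" "x \<in> U"
  shows "(h has_derivative (\<lambda>v. dir_deriv v h x)) (at x)"
proof -
  have line: "\<And>p v. p \<in> U \<Longrightarrow> (\<lambda>t. h (p + t *\<^sub>R v)) differentiable (at 0)"
    using assms(1) unfolding smooth_on_def by (metis iter_dd.simps(1))
  have cont: "\<And>i. continuous_on U (dir_deriv (axis i 1) h)"
    using assms(1) unfolding smooth_on_def by (metis iter_dd.simps)
  have d: "(h has_derivative (\<lambda>v. \<Sum>i\<in>UNIV. v$i * dir_deriv (axis i 1) h x)) (at x)"
    by (rule partials_frechet[OF assms(2,3) line cont])
  have "(\<lambda>v. dir_deriv v h x) = (\<lambda>v. \<Sum>i\<in>UNIV. v$i * dir_deriv (axis i 1) h x)"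
    using frechet_dir(2)[OF d] by (rule ext)
  then show ?thesis using d by simp
qed

lemma mk_smooth: "minkowski_norm F \<Longrightarrow> smooth_on (UNIV - {0}) F"
  unfolding minkowski_norm_def by blast

lemma open_nz: "open (UNIV - {0::real^'n})" by (simp add: open_Diff)

lemma F_der:
  fixes F :: "real^'n \<Rightarrow> real"
  assumes "minkowski_norm F" "x \<noteq> 0"
  shows "(F has_derivative (\<lambda>v. dir_deriv v F x)) (at x)"
  using smooth_frechet[OF mk_smooth[OF assms(1)] open_nz] assms(2) by simp

lemma DF_der:
  fixes F :: "real^'n \<Rightarrow> real"
  assumes "minkowski_norm F" "x \<noteq> 0"
  shows "(dir_deriv w F has_derivative (\<lambda>v. dir_deriv v (dir_deriv w F) x)) (at x)"
  using smooth_frechet[OF smooth_shift[OF mk_smooth[OF assms(1)]] open_nz] assms(2) by simp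

lemma energy_eq: "energy F = (\<lambda>y. F y * F y / 2)"
  by (rule ext) (simp add: energy_def power2_eq_square)

lemma E_der:
  fixes F :: "real^'n \<Rightarrow> real"
  assumes "minkowski_norm F" "x \<noteq> 0"
  shows "(energy F has_derivative (\<lambda>v. F x * dir_deriv v F x)) (at x)"
proof -
  have "((\<lambda>y. F y * F y / 2) has_derivative (\<lambda>v. (F x * dir_deriv v F x + dir_deriv v F x * F x) / 2)) (at x)"
    by (auto intro!: derivative_eq_intros F_der[OF assms])
  then show ?thesis unfolding energy_eq by (simp add: algebra_simps)
qed

lemma DE_eq:
  fixes F :: "real^'n \<Rightarrow> real"
  assumes "minkowski_norm F" "x \<noteq> 0"
  shows "dir_deriv v (energy F) x = F x * dir_deriv v F x"
  using frechet_dir(2)[OF E_der[OF assms]] .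

lemma DE_der:
  fixes F :: "real^'n \<Rightarrow> real"
  assumes "minkowski_norm F" "x \<noteq> 0"
  shows "(dir_deriv w (energy F) has_derivative
     (\<lambda>u. dir_deriv u F x * dir_deriv w F x + F x * dir_deriv u (dir_deriv w F) x)) (at x)"
proof -
  have "((\<lambda>p. F p * dir_deriv w F p) has_derivative
     (\<lambda>u. F x * dir_deriv u (dir_deriv w F) x + dir_deriv u F x * dir_deriv w F x)) (at x)"
    by (rule has_derivative_mult[OF F_der[OF assms] DF_der[OF assms], simplified])
  then have "(dir_deriv w (energy F) has_derivative
     (\<lambda>u. F x * dir_deriv u (dir_deriv w F) x + dir_deriv u F x * dir_deriv w F x)) (at x)"
    by (rule has_derivative_transform_within_open[OF _ open_nz]) (use assms DE_eq[OF assms(1)] in auto)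
  then show ?thesis by (simp add: add.commute)
qed

lemma hess_eq:
  fixes F :: "real^'n \<Rightarrow> real"
  assumes "minkowski_norm F" "x \<noteq> 0"
  shows "hess_metric F x u w = dir_deriv u F x * dir_deriv w F x + F x * dir_deriv u (dir_deriv w F) x"
  unfolding hess_metric_def using frechet_dir(2)[OF DE_der[OF assms]] .

lemma dF_linear:
  fixes F :: "real^'n \<Rightarrow> real"
  assumes "minkowski_norm F" "x \<noteq> 0"
  shows "linear (\<lambda>v. dir_deriv v F x)"
  using has_derivative_linear[OF F_der[OF assms]] .

lemma d2_linear_u:
  fixes F :: "real^'n \<Rightarrow> real"
  assumes "minkowski_norm F" "x \<noteq> 0"
  shows "linear (\<lambda>u. dir_deriv u (dir_deriv w F) x)"
  using has_derivative_linear[OF DF_der[OF assms]] .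

lemma dF_comb:
  fixes F :: "real^'n \<Rightarrow> real"
  assumes "minkowski_norm F" "x \<noteq> 0"
  shows "dir_deriv (a *\<^sub>R w + b *\<^sub>R w') F x = a * dir_deriv w F x + b * dir_deriv w' F x"
  using linear_add[OF dF_linear[OF assms], of "a *\<^sub>R w" "b *\<^sub>R w'"]
    linear_scale[OF dF_linear[OF assms], of a w] linear_scale[OF dF_linear[OF assms], of b w'] by simp

lemma d2_comb_w:
  fixes F :: "real^'n \<Rightarrow> real"
  assumes "minkowski_norm F" "x \<noteq> 0"
  shows "dir_deriv u (dir_deriv (a *\<^sub>R w + b *\<^sub>R w') F) x
     = a * dir_deriv u (dir_deriv w F) x + b * dir_deriv u (dir_deriv w' F) x"
proof -
  have "((\<lambda>p. a * dir_deriv w F p + b * dir_deriv w' F p) has_derivative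
     (\<lambda>u. a * dir_deriv u (dir_deriv w F) x + b * dir_deriv u (dir_deriv w' F) x)) (at x)"
    by (auto intro!: derivative_eq_intros DF_der[OF assms])
  then have "(dir_deriv (a *\<^sub>R w + b *\<^sub>R w') F has_derivative
     (\<lambda>u. a * dir_deriv u (dir_deriv w F) x + b * dir_deriv u (dir_deriv w' F) x)) (at x)"
    by (rule has_derivative_transform_within_open[OF _ open_nz]) (use assms dF_comb[OF assms(1)] in auto)
  then show ?thesis using frechet_dir(2) by blast
qed

lemma hess_linear_u:
  fixes F :: "real^'n \<Rightarrow> real"
  assumes "minkowski_norm F" "x \<noteq> 0"
  shows "linear (\<lambda>u. hess_metric F x u w)"
  unfolding hess_metric_def frechet_dir(2)[OF DE_der[OF assms]]
  using has_derivative_linear[OF DE_der[OF assms]] .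

lemma hess_comb_w:
  fixes F :: "real^'n \<Rightarrow> real"
  assumes "minkowski_norm F" "x \<noteq> 0"
  shows "hess_metric F x u (a *\<^sub>R w + b *\<^sub>R w') = a * hess_metric F x u w + b * hess_metric F x u w'"
  unfolding hess_eq[OF assms] dF_comb[OF assms] d2_comb_w[OF assms] by (simp add: algebra_simps)

lemma hess_linear_w:
  fixes F :: "real^'n \<Rightarrow> real"
  assumes "minkowski_norm F" "x \<noteq> 0"
  shows "linear (\<lambda>w. hess_metric F x u w)"
proof (rule linearI)
  fix w w' :: "real^'n" and c :: real
  show "hess_metric F x u (w + w') = hess_metric F x u w + hess_metric F x u w'"
    using hess_comb_w[OF assms, of u 1 w 1 w'] by simp
  show "hess_metric F x u (c *\<^sub>R w) = c *\<^sub>R hess_metric F x u w"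
    using hess_comb_w[OF assms, of u c w 0 w] by simp
qed



definition rot :: "'n::finite \<Rightarrow> 'n \<Rightarrow> real \<Rightarrow> real^'n^'n" where
 "rot i j \<theta> = (\<chi> p q. (if p = q then 1 else 0) + (if p = i \<and> q = i then cos \<theta> - 1 else 0)
    + (if p = j \<and> q = j then cos \<theta> - 1 else 0) + (if p = j \<and> q = i then sin \<theta> else 0)
    - (if p = i \<and> q = j then sin \<theta> else 0))"

definition munit :: "'n::finite \<Rightarrow> 'n \<Rightarrow> real^'n^'n" where
  "munit a b = (\<chi> p q. if p = a \<and> q = b then 1 else 0)"

lemma munit_mulv: "munit a b *v x = x$b *\<^sub>R axis a 1"
proof -
  have "(munit a b *v x) $ p = (x$b *\<^sub>R axis a 1) $ p" for p
  proof (cases "p = a")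
    case True
    have "(munit a b *v x) $ p = (\<Sum>q\<in>UNIV. (if q = b then 1 else 0) * x$q)"
      using True by (simp add: matrix_vector_mult_def munit_def)
    also have "\<dots> = (\<Sum>q\<in>UNIV. if q = b then x$q else 0)" by (rule sum.cong) auto
    also have "\<dots> = x$b" by simp
    finally show ?thesis using True by (simp add: axis_def)
  next
    case False
    then show ?thesis by (simp add: matrix_vector_mult_def munit_def axis_def)
  qed
  then show ?thesis by (simp add: vec_eq_iff)
qed

lemma rot_units: "rot i j \<theta> = mat 1 + (cos \<theta> - 1) *\<^sub>R (munit i i + munit j j) + sin \<theta> *\<^sub>R (munit j i - munit i j)"
  by (simp add: vec_eq_iff rot_def munit_def mat_def)

lemma rot_mulv:
  assumes "i \<noteq> j"
  shows "rot i j \<theta> *v x = x + ((cos \<theta> - 1) * x$i - sin \<theta> * x$j) *\<^sub>R axis i 1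
     + (sin \<theta> * x$i + (cos \<theta> - 1) * x$j) *\<^sub>R axis j 1"
  unfolding rot_units
  by (simp add: matrix_vector_mult_add_rdistrib matrix_vector_mult_diff_rdistrib
      scaleR_matrix_vector_assoc[symmetric] munit_mulv algebra_simps)

lemma rot_mulv_nth:
  assumes "i \<noteq> j"
  shows "(rot i j \<theta> *v x) $ p = (if p = i then cos \<theta> * x$i - sin \<theta> * x$j
      else if p = j then sin \<theta> * x$i + cos \<theta> * x$j else x$p)"
  using assms by (simp add: rot_mulv[OF assms] axis_def algebra_simps)

lemma rot_transpose: "transpose (rot i j \<theta>) = rot i j (-\<theta>)"
proof -
  have "transpose (rot i j \<theta>) $ p $ q = rot i j (-\<theta>) $ p $ q" for p q
    by (cases "p = i"; cases "p = j"; cases "q = i"; cases "q = j") (simp_all add: transpose_def rot_def)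
  then show ?thesis by (simp add: vec_eq_iff)
qed

lemma rot_zero: "rot i j 0 = mat 1"
  by (simp add: rot_units)

lemma rot_add:
  assumes "i \<noteq> j"
  shows "rot i j a ** rot i j b = rot i j (a + b)"
proof -
  have "(rot i j a ** rot i j b) *v x = rot i j (a + b) *v x" for x
    unfolding matrix_vector_mul_assoc[symmetric]
    using assms by (auto simp: vec_eq_iff rot_mulv_nth cos_add sin_add algebra_simps)
  then show ?thesis by (simp add: matrix_eq)
qed

lemma rot_orth:
  assumes "i \<noteq> j"
  shows "orthogonal_matrix (rot i j \<theta>)"
  unfolding orthogonal_matrix_def rot_transpose rot_add[OF assms] by (simp add: rot_zero)

lemma rot_det:
  assumes "i \<noteq> j"
  shows "det (rot i j \<theta>) = 1"
proof -
  have "det (rot i j \<theta>) = det (rot i j (\<theta>/2)) * det (rot i j (\<theta>/2))"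
    using rot_add[OF assms, of "\<theta>/2" "\<theta>/2"] det_mul by (metis field_sum_of_halves)
  moreover have "det (rot i j (\<theta>/2)) = 1 \<or> det (rot i j (\<theta>/2)) = -1"
    by (rule det_orthogonal_matrix[OF rot_orth[OF assms]])
  ultimately show ?thesis by auto
qed

lemma blockdiag_rot_l: "blockdiag (rot a a' \<theta>) (mat 1) = rot (Inl a) (Inl a') \<theta>"
  by (auto simp: vec_eq_iff blockdiag_def rot_def mat_def split: sum.splits)

lemma blockdiag_rot_r: "blockdiag (mat 1) (rot b b' \<theta>) = rot (Inr b) (Inr b') \<theta>"
  by (auto simp: vec_eq_iff blockdiag_def rot_def mat_def split: sum.splits)

lemma inv_rot_l:
  fixes F :: "real^('k::finite + 'm::finite) \<Rightarrow> real"
  assumes "SO_invariant F" "a \<noteq> a'"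
  shows "F (rot (Inl a) (Inl a') \<theta> *v z) = F z"
  using assms(1) unfolding SO_invariant_def blockdiag_rot_l[symmetric]
  using rot_orth[OF assms(2)] rot_det[OF assms(2)] orthogonal_matrix_id det_I
  by (metis (no_types))

lemma inv_rot_r:
  fixes F :: "real^('k::finite + 'm::finite) \<Rightarrow> real"
  assumes "SO_invariant F" "b \<noteq> b'"
  shows "F (rot (Inr b) (Inr b') \<theta> *v z) = F z"
  using assms(1) unfolding SO_invariant_def blockdiag_rot_r[symmetric]
  using rot_orth[OF assms(2)] rot_det[OF assms(2)] orthogonal_matrix_id det_I
  by (metis (no_types))



lemma chain_curve:
  assumes "(h has_derivative L) (at (P t))" "(P has_vector_derivative V) (at t)"
  shows "((\<lambda>s. h (P s)) has_real_derivative L V) (at t)"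
proof -
  have "((h \<circ> P) has_derivative (L \<circ> (\<lambda>x. x *\<^sub>R V))) (at t)"
    using diff_chain_at[of P "\<lambda>x. x *\<^sub>R V" t h L] assms by (simp add: has_vector_derivative_def)
  moreover have "L \<circ> (\<lambda>x. x *\<^sub>R V) = (*) (L V)"
    using linear_scale[OF has_derivative_linear[OF assms(1)]] by (auto simp: fun_eq_iff)
  ultimately show ?thesis by (simp add: has_field_derivative_def o_def)
qed

lemma lin2:
  fixes f :: "'a::real_vector \<Rightarrow> real"
  assumes "linear f"
  shows "f (a *\<^sub>R u - b *\<^sub>R v) = a * f u - b * f v"
  using assms by (simp add: linear_diff linear_scale)

lemma lin_expand:
  fixes f :: "real^'n \<Rightarrow> real"
  assumes "linear f"
  shows "f u = (\<Sum>l\<in>UNIV. u$l * f (axis l 1))"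
proof -
  have "f u = f (\<Sum>l\<in>UNIV. u$l *\<^sub>R axis l 1)"
    using basis_expansion[of u] by (simp add: scalar_mult_eq_scaleR)
  also have "\<dots> = (\<Sum>l\<in>UNIV. u$l * f (axis l 1))"
    by (simp add: linear_sum[OF assms] linear_scale[OF assms])
  finally show ?thesis .
qed

lemma ev_nz:
  fixes z u :: "real^'n"
  assumes "z \<noteq> 0"
  shows "eventually (\<lambda>s. z + s *\<^sub>R u \<noteq> 0) (nhds (0::real))"
proof -
  have "open {s::real. z + s *\<^sub>R u \<noteq> 0}"
    by (rule open_Collect_neq) (auto intro!: continuous_intros)
  then show ?thesis using eventually_nhds_in_open[of "{s::real. z + s *\<^sub>R u \<noteq> 0}" 0] assms by simp
qed

lemma E_der':
  fixes F :: "real^'n \<Rightarrow> real"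
  assumes "minkowski_norm F" "x \<noteq> 0"
  shows "(energy F has_derivative (\<lambda>v. dir_deriv v (energy F) x)) (at x)"
  using E_der[OF assms] DE_eq[OF assms] by simp

lemma DE_der':
  fixes F :: "real^'n \<Rightarrow> real"
  assumes "minkowski_norm F" "x \<noteq> 0"
  shows "(dir_deriv w (energy F) has_derivative (\<lambda>u. hess_metric F x u w)) (at x)"
  using DE_der[OF assms] frechet_dir(2)[OF DE_der[OF assms]] unfolding hess_metric_def by simp

lemma DE_linear:
  fixes F :: "real^'n \<Rightarrow> real"
  assumes "minkowski_norm F" "x \<noteq> 0"
  shows "linear (\<lambda>v. dir_deriv v (energy F) x)"
  using has_derivative_linear[OF E_der'[OF assms]] .

lemma rot_vd:
  assumes "i \<noteq> j"
  shows "((\<lambda>\<theta>. rot i j \<theta> *v z) has_vector_derivative (z$i *\<^sub>R axis j 1 - z$j *\<^sub>R axis i 1)) (at 0)"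
proof -
  have dA: "((\<lambda>\<theta>. (cos \<theta> - 1) * z$i - sin \<theta> * z$j) has_real_derivative - z$j) (at 0)"
    by (auto intro!: derivative_eq_intros)
  have dB: "((\<lambda>\<theta>. sin \<theta> * z$i + (cos \<theta> - 1) * z$j) has_real_derivative z$i) (at 0)"
    by (auto intro!: derivative_eq_intros)
  have "((\<lambda>\<theta>. z + ((cos \<theta> - 1) * z$i - sin \<theta> * z$j) *\<^sub>R axis i 1 + (sin \<theta> * z$i + (cos \<theta> - 1) * z$j) *\<^sub>R axis j 1)
    has_vector_derivative (0 + (((cos 0 - 1) * z$i - sin 0 * z$j) *\<^sub>R 0 + (- z$j) *\<^sub>R axis i 1)
       + ((sin 0 * z$i + (cos 0 - 1) * z$j) *\<^sub>R 0 + z$i *\<^sub>R axis j 1))) (at 0)"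
    by (intro has_vector_derivative_add has_vector_derivative_const has_vector_derivative_scaleR dA dB)
  then show ?thesis unfolding rot_mulv[OF assms] by simp
qed

lemma inf1:
  fixes F :: "real^'n \<Rightarrow> real"
  assumes mink: "minkowski_norm F" and ij: "i \<noteq> j"
    and rinv: "\<And>\<theta> z. F (rot i j \<theta> *v z) = F z" and z: "z \<noteq> 0"
  shows "z$i * dir_deriv (axis j 1) (energy F) z - z$j * dir_deriv (axis i 1) (energy F) z = 0"
proof -
  let ?X = "z$i *\<^sub>R axis j 1 - z$j *\<^sub>R axis i (1::real)"
  have R0: "rot i j 0 *v z = z" by (simp add: rot_zero)
  have d1: "((\<lambda>\<theta>. energy F (rot i j \<theta> *v z)) has_real_derivative dir_deriv ?X (energy F) z) (at 0)"
    using chain_curve[of "energy F" "\<lambda>v. dir_deriv v (energy F) z" "\<lambda>\<theta>. rot i j \<theta> *v z" 0 ?X]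
      E_der'[OF mink z] rot_vd[OF ij] R0 by simp
  have "(\<lambda>\<theta>. energy F (rot i j \<theta> *v z)) = (\<lambda>\<theta>. energy F z)"
    using rinv by (simp add: energy_def)
  then have d2: "((\<lambda>\<theta>. energy F (rot i j \<theta> *v z)) has_real_derivative 0) (at 0)" by simp
  have "dir_deriv ?X (energy F) z = 0" using DERIV_unique[OF d1 d2] .
  moreover have "dir_deriv ?X (energy F) z = z$i * dir_deriv (axis j 1) (energy F) z - z$j * dir_deriv (axis i 1) (energy F) z"
    using lin2[OF DE_linear[OF mink z], of "z$i" "axis j 1" "z$j" "axis i 1"] by simp
  ultimately show ?thesis by simp
qed

lemma inf2:
  fixes F :: "real^'n \<Rightarrow> real"
  assumes mink: "minkowski_norm F" and ij: "i \<noteq> j"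
    and rinv: "\<And>\<theta> z. F (rot i j \<theta> *v z) = F z" and z: "z \<noteq> 0"
    and w: "w$i = 0" "w$j = 0"
  shows "z$i * hess_metric F z (axis j 1) w - z$j * hess_metric F z (axis i 1) w = 0"
proof -
  let ?X = "z$i *\<^sub>R axis j 1 - z$j *\<^sub>R axis i (1::real)"
  have R0: "rot i j 0 *v z = z" by (simp add: rot_zero)
  have Rw: "rot i j \<theta> *v w = w" for \<theta> using w by (simp add: rot_mulv[OF ij])
  have d1: "((\<lambda>\<theta>. dir_deriv w (energy F) (rot i j \<theta> *v z)) has_real_derivative hess_metric F z ?X w) (at 0)"
    using chain_curve[of "dir_deriv w (energy F)" "\<lambda>u. hess_metric F z u w" "\<lambda>\<theta>. rot i j \<theta> *v z" 0 ?X]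
      DE_der'[OF mink z] rot_vd[OF ij] R0 by simp
  have "dir_deriv w (energy F) (rot i j \<theta> *v z) = dir_deriv w (energy F) z" for \<theta>
  proof -
    have "rot i j \<theta> *v z + s *\<^sub>R w = rot i j \<theta> *v (z + s *\<^sub>R w)" for s
      using Rw by (simp add: matrix_vector_right_distrib matrix_vector_mult_scaleR)
    then have "(\<lambda>s. energy F (rot i j \<theta> *v z + s *\<^sub>R w)) = (\<lambda>s. energy F (z + s *\<^sub>R w))"
      using rinv by (simp add: energy_def)
    then show ?thesis by (simp add: dir_deriv_def)
  qed
  then have "(\<lambda>\<theta>. dir_deriv w (energy F) (rot i j \<theta> *v z)) = (\<lambda>\<theta>. dir_deriv w (energy F) z)" by simp
  then have d2: "((\<lambda>\<theta>. dir_deriv w (energy F) (rot i j \<theta> *v z)) has_real_derivative 0) (at 0)" by simp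
  have "hess_metric F z ?X w = 0" using DERIV_unique[OF d1 d2] .
  moreover have "hess_metric F z ?X w = z$i * hess_metric F z (axis j 1) w - z$j * hess_metric F z (axis i 1) w"
    using lin2[OF hess_linear_u[OF mink z, of w], of "z$i" "axis j 1" "z$j" "axis i 1"] by simp
  ultimately show ?thesis by simp
qed

lemma inf3:
  fixes F :: "real^'n \<Rightarrow> real"
  assumes mink: "minkowski_norm F" and ij: "i \<noteq> j"
    and rinv: "\<And>\<theta> z. F (rot i j \<theta> *v z) = F z" and z: "z \<noteq> 0"
    and u: "u$i = 0" "u$j = 0"
  shows "z$i * hess_metric F z u (axis j 1) - z$j * hess_metric F z u (axis i 1) = 0"
proof -
  define \<Phi> where "\<Phi> = (\<lambda>s. z$i * dir_deriv (axis j 1) (energy F) (z + s *\<^sub>R u)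
      - z$j * dir_deriv (axis i 1) (energy F) (z + s *\<^sub>R u))"
  have "\<Phi> s = 0" for s
  proof (cases "z + s *\<^sub>R u = 0")
    case True
    then have "(z + s *\<^sub>R u) $ i = 0" "(z + s *\<^sub>R u) $ j = 0" by simp_all
    then have "z$i = 0" "z$j = 0" using u by simp_all
    then show ?thesis by (simp add: \<Phi>_def)
  next
    case False
    from inf1[OF mink ij rinv False] u show ?thesis by (simp add: \<Phi>_def)
  qed
  then have "\<Phi> = (\<lambda>s. 0)" by (rule ext)
  then have d2: "(\<Phi> has_real_derivative 0) (at 0)" by simp
  have "(\<Phi> has_real_derivative z$i * hess_metric F z u (axis j 1) - z$j * hess_metric F z u (axis i 1)) (at 0)"
    unfolding \<Phi>_def
    by (auto intro!: derivative_eq_intros frechet_dir(1)[OF DE_der'[OF mink z]])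
  from DERIV_unique[OF this d2] show ?thesis .
qed

lemma E_hom:
  fixes F :: "real^'n \<Rightarrow> real"
  assumes "minkowski_norm F" "r > 0"
  shows "energy F (r *\<^sub>R x) = r\<^sup>2 * energy F x"
  using assms unfolding minkowski_norm_def energy_def by (simp add: power_mult_distrib)

lemma DE_hom:
  fixes F :: "real^'n \<Rightarrow> real"
  assumes mink: "minkowski_norm F" and r: "r > 0" and p: "p \<noteq> 0"
  shows "dir_deriv w (energy F) (r *\<^sub>R p) = r * dir_deriv w (energy F) p"
proof -
  have eq: "(\<lambda>s. energy F (r *\<^sub>R p + s *\<^sub>R w)) = (\<lambda>s. r\<^sup>2 * energy F (p + (s / r) *\<^sub>R w))"
  proof
    fix s
    have "r *\<^sub>R p + s *\<^sub>R w = r *\<^sub>R (p + (s / r) *\<^sub>R w)" using r by (simp add: algebra_simps)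
    then show "energy F (r *\<^sub>R p + s *\<^sub>R w) = r\<^sup>2 * energy F (p + (s / r) *\<^sub>R w)"
      using E_hom[OF mink r] by simp
  qed
  have g: "((\<lambda>t. energy F (p + t *\<^sub>R w)) has_real_derivative dir_deriv w (energy F) p) (at (0 / r))"
    using frechet_dir(1)[OF E_der'[OF mink p]] by simp
  have g2: "((\<lambda>s. s / r) has_real_derivative 1 / r) (at 0)"
    using r by (auto intro!: derivative_eq_intros)
  have c: "((\<lambda>s. (\<lambda>t. energy F (p + t *\<^sub>R w)) ((\<lambda>s. s / r) s)) has_real_derivative dir_deriv w (energy F) p * (1 / r)) (at 0)"
    by (rule DERIV_chain2[OF _ g2]) (use g in simp)
  have "((\<lambda>s. r\<^sup>2 * energy F (p + (s / r) *\<^sub>R w)) has_real_derivative r\<^sup>2 * (dir_deriv w (energy F) p * (1 / r))) (at 0)"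
    using DERIV_cmult[OF c, of "r\<^sup>2"] by simp
  then have "((\<lambda>s. energy F (r *\<^sub>R p + s *\<^sub>R w)) has_real_derivative r * dir_deriv w (energy F) p) (at 0)"
    unfolding eq using r by (simp add: power2_eq_square)
  then show ?thesis unfolding dir_deriv_def by (rule DERIV_imp_deriv)
qed

lemma euler1:
  fixes F :: "real^'n \<Rightarrow> real"
  assumes mink: "minkowski_norm F" and z: "z \<noteq> 0"
  shows "hess_metric F z z w = dir_deriv w (energy F) z"
proof -
  have d1: "((\<lambda>s. dir_deriv w (energy F) (z + s *\<^sub>R z)) has_real_derivative hess_metric F z z w) (at 0)"
    using frechet_dir(1)[OF DE_der'[OF mink z]] .
  have ev: "eventually (\<lambda>s. dir_deriv w (energy F) (z + s *\<^sub>R z) = (1 + s) * dir_deriv w (energy F) z) (nhds (0::real))"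
  proof -
    have "eventually (\<lambda>s::real. s \<in> {-1<..}) (nhds 0)"
      by (rule eventually_nhds_in_open) auto
    then show ?thesis
    proof (rule eventually_mono)
      fix s :: real assume "s \<in> {-1<..}"
      then have "1 + s > 0" by simp
      from DE_hom[OF mink this z, of w] show "dir_deriv w (energy F) (z + s *\<^sub>R z) = (1 + s) * dir_deriv w (energy F) z"
        by (simp add: algebra_simps)
    qed
  qed
  have "((\<lambda>s. (1 + s) * dir_deriv w (energy F) z) has_real_derivative dir_deriv w (energy F) z) (at 0)"
    by (auto intro!: derivative_eq_intros)
  then have d2: "((\<lambda>s. dir_deriv w (energy F) (z + s *\<^sub>R z)) has_real_derivative dir_deriv w (energy F) z) (at 0)"
    using DERIV_cong_ev[OF refl ev refl] by simp
  from DERIV_unique[OF d1 d2] show ?thesis .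
qed



lemma DE_self:
  fixes F :: "real^'n \<Rightarrow> real"
  assumes mink: "minkowski_norm F" and p: "p \<noteq> 0"
  shows "dir_deriv p (energy F) p = 2 * energy F p"
proof -
  have ev: "eventually (\<lambda>s. energy F (p + s *\<^sub>R p) = (1 + s)\<^sup>2 * energy F p) (nhds (0::real))"
  proof -
    have "eventually (\<lambda>s::real. s \<in> {-1<..}) (nhds 0)"
      by (rule eventually_nhds_in_open) auto
    then show ?thesis
    proof (rule eventually_mono)
      fix s :: real assume "s \<in> {-1<..}"
      then have "1 + s > 0" by simp
      from E_hom[OF mink this, of p] show "energy F (p + s *\<^sub>R p) = (1 + s)\<^sup>2 * energy F p"
        by (simp add: algebra_simps)
    qed
  qed
  have "((\<lambda>s. (1 + s)\<^sup>2 * energy F p) has_real_derivative 2 * energy F p) (at 0)"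
    by (auto intro!: derivative_eq_intros)
  then have "((\<lambda>s. energy F (p + s *\<^sub>R p)) has_real_derivative 2 * energy F p) (at 0)"
    using DERIV_cong_ev[OF refl ev refl] by simp
  then show ?thesis unfolding dir_deriv_def by (rule DERIV_imp_deriv)
qed

lemma euler2:
  fixes F :: "real^'n \<Rightarrow> real"
  assumes mink: "minkowski_norm F" and z: "z \<noteq> 0"
  shows "hess_metric F z u z = dir_deriv u (energy F) z"
proof -
  define \<Psi> where "\<Psi> = (\<lambda>s. \<Sum>l\<in>UNIV. (z + s *\<^sub>R u)$l * dir_deriv (axis l 1) (energy F) (z + s *\<^sub>R u))"
  have ev: "eventually (\<lambda>s. \<Psi> s = 2 * energy F (z + s *\<^sub>R u)) (nhds (0::real))"
    using ev_nz[OF z, of u]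
  proof (rule eventually_mono)
    fix s :: real assume nz: "z + s *\<^sub>R u \<noteq> 0"
    show "\<Psi> s = 2 * energy F (z + s *\<^sub>R u)"
      unfolding \<Psi>_def DE_self[OF mink nz, symmetric]
      using lin_expand[OF DE_linear[OF mink nz], of "z + s *\<^sub>R u"] by simp
  qed
  have "((\<lambda>s. 2 * energy F (z + s *\<^sub>R u)) has_real_derivative 2 * dir_deriv u (energy F) z) (at 0)"
    by (intro DERIV_cmult frechet_dir(1)[OF E_der'[OF mink z]])
  then have d1: "(\<Psi> has_real_derivative 2 * dir_deriv u (energy F) z) (at 0)"
    using DERIV_cong_ev[OF refl ev refl] by simp
  have "(\<Psi> has_real_derivative (\<Sum>l\<in>UNIV. u$l * dir_deriv (axis l 1) (energy F) z + hess_metric F z u (axis l 1) * z$l)) (at 0)"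
    unfolding \<Psi>_def
    by (auto intro!: derivative_eq_intros frechet_dir(1)[OF DE_der'[OF mink z]])
  moreover have "(\<Sum>l\<in>UNIV. u$l * dir_deriv (axis l 1) (energy F) z) = dir_deriv u (energy F) z"
    using lin_expand[OF DE_linear[OF mink z], of u] by simp
  moreover have "(\<Sum>l\<in>UNIV. hess_metric F z u (axis l 1) * z$l) = hess_metric F z u z"
    using lin_expand[OF hess_linear_w[OF mink z], of u z] by (simp add: mult.commute)
  ultimately have d2: "(\<Psi> has_real_derivative dir_deriv u (energy F) z + hess_metric F z u z) (at 0)"
    by (simp add: sum.distrib)
  from DERIV_unique[OF d1 d2] show ?thesis by simp
qed

lemma hess_hom:
  fixes F :: "real^'n \<Rightarrow> real"
  assumes mink: "minkowski_norm F" and r: "r > 0" and z: "z \<noteq> 0"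
  shows "hess_metric F (r *\<^sub>R z) u w = hess_metric F z u w"
proof -
  let ?u = "(1 / r) *\<^sub>R u"
  have ev: "eventually (\<lambda>s. dir_deriv w (energy F) (r *\<^sub>R z + s *\<^sub>R u) = r * dir_deriv w (energy F) (z + s *\<^sub>R ?u)) (nhds (0::real))"
    using ev_nz[OF z, of ?u]
  proof (rule eventually_mono)
    fix s :: real assume nz: "z + s *\<^sub>R ?u \<noteq> 0"
    have "r *\<^sub>R z + s *\<^sub>R u = r *\<^sub>R (z + s *\<^sub>R ?u)" using r by (simp add: algebra_simps)
    then show "dir_deriv w (energy F) (r *\<^sub>R z + s *\<^sub>R u) = r * dir_deriv w (energy F) (z + s *\<^sub>R ?u)"
      using DE_hom[OF mink r nz] by simp
  qed
  have "((\<lambda>s. r * dir_deriv w (energy F) (z + s *\<^sub>R ?u)) has_real_derivative r * hess_metric F z ?u w) (at 0)"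
    by (intro DERIV_cmult frechet_dir(1)[OF DE_der'[OF mink z]])
  moreover have "r * hess_metric F z ?u w = hess_metric F z u w"
    using linear_scale[OF hess_linear_u[OF mink z, of w], of "1/r" u] r by simp
  ultimately have "((\<lambda>s. dir_deriv w (energy F) (r *\<^sub>R z + s *\<^sub>R u)) has_real_derivative hess_metric F z u w) (at 0)"
    using DERIV_cong_ev[OF refl ev refl] by simp
  then show ?thesis unfolding hess_metric_def dir_deriv_def[of u] by (rule DERIV_imp_deriv)
qed

lemma hess_rot:
  fixes F :: "real^'n \<Rightarrow> real"
  assumes rinv: "\<And>z. F (T *v z) = F z"
  shows "hess_metric F (T *v z) (T *v u) (T *v w) = hess_metric F z u w"
proof -
  have D: "dir_deriv (T *v w) (energy F) (T *v p) = dir_deriv w (energy F) p" for p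
  proof -
    have "T *v p + s *\<^sub>R (T *v w) = T *v (p + s *\<^sub>R w)" for s
      by (simp add: matrix_vector_right_distrib matrix_vector_mult_scaleR)
    then have "(\<lambda>s. energy F (T *v p + s *\<^sub>R (T *v w))) = (\<lambda>s. energy F (p + s *\<^sub>R w))"
      using rinv by (simp add: energy_def)
    then show ?thesis by (simp add: dir_deriv_def)
  qed
  have "T *v z + s *\<^sub>R (T *v u) = T *v (z + s *\<^sub>R u)" for s
    by (simp add: matrix_vector_right_distrib matrix_vector_mult_scaleR)
  then have "(\<lambda>s. dir_deriv (T *v w) (energy F) (T *v z + s *\<^sub>R (T *v u))) = (\<lambda>s. dir_deriv w (energy F) (z + s *\<^sub>R u))"
    using D by simp
  then show ?thesis by (simp add: hess_metric_def dir_deriv_def[of "T *v u"] dir_deriv_def[of u])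
qed

lemma rot_pi:
  assumes "i \<noteq> j"
  shows "rot i j pi *v x = x - (2 * x$i) *\<^sub>R axis i 1 - (2 * x$j) *\<^sub>R axis j 1"
  using assms by (auto simp: vec_eq_iff rot_mulv_nth axis_def)

lemma quad_hess:
  fixes F :: "real^'n \<Rightarrow> real" and Q :: "real^'n^'n"
  assumes U: "open U" "p \<in> U" and Qs: "transpose Q = Q"
    and EQ: "\<And>q. q \<in> U \<Longrightarrow> energy F q = q \<bullet> (Q *v q) / 2"
  shows "hess_metric F p u w = w \<bullet> (Q *v u)"
proof -
  have sym: "a \<bullet> (Q *v b) = b \<bullet> (Q *v a)" for a b
    by (metis Qs dot_lmul_matrix inner_commute transpose_matrix_vector)
  have evU: "eventually (\<lambda>s. q + s *\<^sub>R v \<in> U) (nhds (0::real))" if "q \<in> U" for q v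
  proof -
    have "open ((\<lambda>s::real. q + s *\<^sub>R v) -` U)"
      by (rule open_vimage[OF U(1)]) (intro continuous_intros)
    then show ?thesis using eventually_nhds_in_open[of "(\<lambda>s::real. q + s *\<^sub>R v) -` U" 0] that by simp
  qed
  have DEq: "dir_deriv w (energy F) q = w \<bullet> (Q *v q)" if q: "q \<in> U" for q
  proof -
    have ev: "eventually (\<lambda>s. energy F (q + s *\<^sub>R w) = q \<bullet> (Q *v q) / 2 + s * (w \<bullet> (Q *v q)) + s\<^sup>2 * (w \<bullet> (Q *v w)) / 2) (nhds (0::real))"
      using evU[OF q, of w]
    proof (rule eventually_mono)
      fix s :: real assume "q + s *\<^sub>R w \<in> U"
      then have e: "energy F (q + s *\<^sub>R w) = (q + s *\<^sub>R w) \<bullet> (Q *v (q + s *\<^sub>R w)) / 2" by (rule EQ)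
      have ex: "(q + s *\<^sub>R w) \<bullet> (Q *v (q + s *\<^sub>R w)) = q \<bullet> (Q *v q) + s * (q \<bullet> (Q *v w)) + s * (w \<bullet> (Q *v q)) + s * s * (w \<bullet> (Q *v w))"
        by (simp add: matrix_vector_right_distrib matrix_vector_mult_scaleR inner_add_left inner_add_right algebra_simps)
      show "energy F (q + s *\<^sub>R w) = q \<bullet> (Q *v q) / 2 + s * (w \<bullet> (Q *v q)) + s\<^sup>2 * (w \<bullet> (Q *v w)) / 2"
        unfolding e ex sym[of q w] by (simp add: power2_eq_square field_simps)
    qed
    have "((\<lambda>s. q \<bullet> (Q *v q) / 2 + s * (w \<bullet> (Q *v q)) + s\<^sup>2 * (w \<bullet> (Q *v w)) / 2) has_real_derivative w \<bullet> (Q *v q)) (at 0)"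
      by (auto intro!: derivative_eq_intros)
    then have "((\<lambda>s. energy F (q + s *\<^sub>R w)) has_real_derivative w \<bullet> (Q *v q)) (at 0)"
      using DERIV_cong_ev[OF refl ev refl] by simp
    then show ?thesis unfolding dir_deriv_def by (rule DERIV_imp_deriv)
  qed
  have ev: "eventually (\<lambda>s. dir_deriv w (energy F) (p + s *\<^sub>R u) = w \<bullet> (Q *v p) + s * (w \<bullet> (Q *v u))) (nhds (0::real))"
    using evU[OF U(2), of u]
  proof (rule eventually_mono)
    fix s :: real assume "p + s *\<^sub>R u \<in> U"
    then show "dir_deriv w (energy F) (p + s *\<^sub>R u) = w \<bullet> (Q *v p) + s * (w \<bullet> (Q *v u))"
      using DEq by (simp add: matrix_vector_right_distrib matrix_vector_mult_scaleR inner_add_right)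
  qed
  have "((\<lambda>s. w \<bullet> (Q *v p) + s * (w \<bullet> (Q *v u))) has_real_derivative w \<bullet> (Q *v u)) (at 0)"
    by (auto intro!: derivative_eq_intros)
  then have "((\<lambda>s. dir_deriv w (energy F) (p + s *\<^sub>R u)) has_real_derivative w \<bullet> (Q *v u)) (at 0)"
    using DERIV_cong_ev[OF refl ev refl] by simp
  then show ?thesis unfolding hess_metric_def dir_deriv_def[of u] by (rule DERIV_imp_deriv)
qed



lemma lin_comb:
  fixes f :: "'a::real_vector \<Rightarrow> real"
  assumes "linear f"
  shows "f (a *\<^sub>R u + b *\<^sub>R v) = a * f u + b * f v"
  using assms by (simp add: linear_add linear_scale)

lemma polar_alg:
  fixes c s h11 h12 h22 d1 d2 :: real
  assumes "c * h11 + s * h12 = d1" "c * h12 + s * h22 = d2" "s\<^sup>2 + c\<^sup>2 = 1"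
  shows "- c * s * (- c * d1 - s * (- s * h11 + c * h12) - s * d2 + c * (- s * h12 + c * h22))
     + (c\<^sup>2 - s\<^sup>2) * (- s * d1 + c * d2) = h12"
proof -
  have "- c * s * (- c * d1 - s * (- s * h11 + c * h12) - s * d2 + c * (- s * h12 + c * h22))
     + (c\<^sup>2 - s\<^sup>2) * (- s * d1 + c * d2) = h12 * ((s\<^sup>2 + c\<^sup>2) * (s\<^sup>2 + c\<^sup>2))"
    unfolding assms(1,2)[symmetric] by (simp add: power2_eq_square algebra_simps)
  then show ?thesis using assms(3) by simp
qed

lemma polar:
  fixes F :: "real^'n \<Rightarrow> real"
  assumes mink: "minkowski_norm F" and ij: "i \<noteq> j" and s0: "sin t \<noteq> 0"
  shows "hess_metric F (cos t *\<^sub>R axis i 1 + sin t *\<^sub>R axis j 1) (axis i 1) (axis j 1)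
     = - cos t * sin t * deriv (deriv (\<lambda>t. energy F (cos t *\<^sub>R axis i 1 + sin t *\<^sub>R axis j 1))) t
       + ((cos t)\<^sup>2 - (sin t)\<^sup>2) * deriv (\<lambda>t. energy F (cos t *\<^sub>R axis i 1 + sin t *\<^sub>R axis j 1)) t"
proof -
  define e1 where "e1 = axis i (1::real)"
  define e2 where "e2 = axis j (1::real)"
  define P where "P = (\<lambda>\<tau>. cos \<tau> *\<^sub>R e1 + sin \<tau> *\<^sub>R e2)"
  define P' where "P' = (\<lambda>\<tau>. - sin \<tau> *\<^sub>R e1 + cos \<tau> *\<^sub>R e2)"
  define f where "f = (\<lambda>\<tau>. energy F (P \<tau>))"
  define D where "D = (\<lambda>v p. dir_deriv v (energy F) p)"
  define H where "H = (\<lambda>\<tau> u w. hess_metric F (P \<tau>) u w)"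
  have Pnz: "P \<tau> \<noteq> 0" for \<tau>
  proof
    assume "P \<tau> = 0"
    then have "(P \<tau>)$i = 0" "(P \<tau>)$j = 0" by auto
    then have "cos \<tau> = 0" "sin \<tau> = 0" using ij by (auto simp: P_def e1_def e2_def axis_def)
    then show False using sin_cos_squared_add[of \<tau>] by simp
  qed
  have Pd: "(P has_vector_derivative P' \<tau>) (at \<tau>)" for \<tau>
    unfolding P_def P'_def has_vector_derivative_def
    by (auto intro!: derivative_eq_intros simp: algebra_simps)
  have fd: "(f has_real_derivative (- sin \<tau> * D e1 (P \<tau>) + cos \<tau> * D e2 (P \<tau>))) (at \<tau>)" for \<tau>
  proof -
    have "(f has_real_derivative D (P' \<tau>) (P \<tau>)) (at \<tau>)"
      unfolding f_def D_def by (rule chain_curve[OF E_der'[OF mink Pnz] Pd])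
    moreover have "D (P' \<tau>) (P \<tau>) = - sin \<tau> * D e1 (P \<tau>) + cos \<tau> * D e2 (P \<tau>)"
      unfolding D_def P'_def using lin_comb[OF DE_linear[OF mink Pnz[of \<tau>]], of "- sin \<tau>" e1 "cos \<tau>" e2] by simp
    ultimately show ?thesis by simp
  qed
  have df: "deriv f = (\<lambda>\<tau>. - sin \<tau> * D e1 (P \<tau>) + cos \<tau> * D e2 (P \<tau>))"
    using fd DERIV_imp_deriv by blast
  have Dd: "((\<lambda>\<tau>. D w (P \<tau>)) has_real_derivative H t (P' t) w) (at t)" for w
    unfolding D_def H_def by (rule chain_curve[OF DE_der'[OF mink Pnz] Pd])
  have Hl: "H t (P' t) w = - sin t * H t e1 w + cos t * H t e2 w" for w
    unfolding H_def P'_def using lin_comb[OF hess_linear_u[OF mink Pnz[of t], of w], of "- sin t" e1 "cos t" e2] by simp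
  have "((\<lambda>\<tau>. - sin \<tau> * D e1 (P \<tau>) + cos \<tau> * D e2 (P \<tau>)) has_real_derivative
      (- cos t * D e1 (P t) - sin t * H t (P' t) e1 - sin t * D e2 (P t) + cos t * H t (P' t) e2)) (at t)"
    by (auto intro!: derivative_eq_intros Dd simp: algebra_simps)
  then have ddf: "deriv (deriv f) t = - cos t * D e1 (P t) - sin t * H t (P' t) e1 - sin t * D e2 (P t) + cos t * H t (P' t) e2"
    unfolding df by (rule DERIV_imp_deriv)
  have eu1: "cos t * H t e1 w + sin t * H t e2 w = D w (P t)" for w
  proof -
    have "H t (P t) w = D w (P t)" unfolding H_def D_def by (rule euler1[OF mink Pnz])
    moreover have "H t (P t) w = cos t * H t e1 w + sin t * H t e2 w"
      unfolding H_def P_def using lin_comb[OF hess_linear_u[OF mink Pnz[of t], of w], of "cos t" e1 "sin t" e2] by (simp add: P_def)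
    ultimately show ?thesis by simp
  qed
  have eu2: "cos t * H t e1 e1 + sin t * H t e1 e2 = D e1 (P t)"
  proof -
    have "H t e1 (P t) = D e1 (P t)" unfolding H_def D_def by (rule euler2[OF mink Pnz])
    moreover have "H t e1 (P t) = cos t * H t e1 e1 + sin t * H t e1 e2"
      unfolding H_def P_def using lin_comb[OF hess_linear_w[OF mink Pnz[of t], of e1], of "cos t" e1 "sin t" e2] by (simp add: P_def)
    ultimately show ?thesis by simp
  qed
  have "sin t * H t e2 e1 - sin t * H t e1 e2 = 0" using eu1[of e1] eu2 by linarith
  then have "sin t * (H t e2 e1 - H t e1 e2) = 0" by (simp add: right_diff_distrib)
  then have sym: "H t e2 e1 = H t e1 e2" using s0 by simp
  have A: "cos t * H t e1 e1 + sin t * H t e1 e2 = D e1 (P t)" using eu1[of e1] sym by simp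
  have B: "cos t * H t e1 e2 + sin t * H t e2 e2 = D e2 (P t)" using eu1[of e2] by simp
  have sc: "(sin t)\<^sup>2 + (cos t)\<^sup>2 = 1" by simp
  have df_t: "deriv f t = - sin t * D e1 (P t) + cos t * D e2 (P t)" using df by simp
  have "- cos t * sin t * deriv (deriv f) t + ((cos t)\<^sup>2 - (sin t)\<^sup>2) * deriv f t = H t e1 e2"
    unfolding ddf df_t Hl sym
    by (rule polar_alg[OF A B sc])
  then show ?thesis unfolding H_def P_def f_def e1_def e2_def by simp
qed



lemma spanL_comp:
  fixes v :: "real^('k::finite + 'm::finite)"
  assumes "v \<in> span (range (\<lambda>a. axis (Inl a) (1::real)))"
  shows "v $ Inr b = 0"
  using assms by (induction rule: span_induct_alt) (auto simp: axis_def)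

lemma spanR_comp:
  fixes v :: "real^('k::finite + 'm::finite)"
  assumes "v \<in> span (range (\<lambda>b. axis (Inr b) (1::real)))"
  shows "v $ Inl a = 0"
  using assms by (induction rule: span_induct_alt) (auto simp: axis_def)

lemma card_other:
  assumes "CARD('a::finite) \<ge> 2"
  shows "\<exists>b'::'a. b' \<noteq> b"
proof (rule ccontr)
  assume "\<not> ?thesis"
  then have u: "UNIV = {b}" by auto
  have "card (UNIV::'a set) = card {b}" by (simp only: u)
  then show False using assms by simp
qed

lemma card_two:
  fixes a a0 :: "'a::finite"
  assumes "a \<noteq> a0"
  shows "CARD('a) > 1"
proof -
  have "card {a, a0} \<le> CARD('a)" by (rule card_mono) auto
  then show ?thesis using assms by simp
qed

lemma expand_single:
  fixes H :: "real^('k::finite + 'm::finite) \<Rightarrow> real^('k + 'm) \<Rightarrow> real"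
  assumes lu: "\<And>w. linear (\<lambda>u. H u w)" and lw: "\<And>u. linear (\<lambda>w. H u w)"
    and uL: "\<And>b. u $ Inr b = 0" and wR: "\<And>a. w $ Inl a = 0"
    and zero: "\<And>a b. (a, b) \<noteq> (a0, b0) \<Longrightarrow> H (axis (Inl a) 1) (axis (Inr b) 1) = 0"
  shows "H u w = u $ Inl a0 * w $ Inr b0 * H (axis (Inl a0) 1) (axis (Inr b0) 1)"
proof -
  have pt: "u$p * (w$q * H (axis p 1) (axis q 1)) = (if p = Inl a0 then (if q = Inr b0 then
        u $ Inl a0 * w $ Inr b0 * H (axis (Inl a0) 1) (axis (Inr b0) 1) else 0) else 0)" for p q
    proof (cases p)
      case pl: (Inl a)
      show ?thesis
      proof (cases q)
        case (Inl a')
        then show ?thesis using wR[of a'] pl by simp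
      next
        case qr: (Inr b)
        show ?thesis
        proof (cases "a = a0 \<and> b = b0")
          case True
          then show ?thesis using pl qr by simp
        next
          case False
          then have "H (axis (Inl a) 1) (axis (Inr b) 1) = 0" using zero[of a b] by auto
          then show ?thesis using pl qr False by auto
        qed
      qed
    next
      case (Inr b)
      then show ?thesis using uL[of b] by simp
    qed
  have "H u w = (\<Sum>p\<in>UNIV. u$p * H (axis p 1) w)" by (rule lin_expand[OF lu])
  also have "\<dots> = (\<Sum>p\<in>UNIV. \<Sum>q\<in>UNIV. u$p * (w$q * H (axis p 1) (axis q 1)))"
    by (simp add: lin_expand[OF lw, of _ w] sum_distrib_left)
  also have "\<dots> = (\<Sum>p\<in>UNIV. if p = (Inl a0 :: 'k + 'm) then (\<Sum>q\<in>UNIV. if q = (Inr b0 :: 'k + 'm) then u $ Inl a0 * w $ Inr b0 * H (axis (Inl a0) 1) (axis (Inr b0) 1) else 0) else 0)"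
  proof (rule sum.cong[OF refl])
    fix p :: "'k + 'm"
    show "(\<Sum>q\<in>UNIV. u$p * (w$q * H (axis p 1) (axis q 1))) = (if p = Inl a0 then (\<Sum>q\<in>UNIV. if q = (Inr b0 :: 'k + 'm) then u $ Inl a0 * w $ Inr b0 * H (axis (Inl a0) 1) (axis (Inr b0) 1) else 0) else 0)"
      by (cases "p = Inl a0") (simp_all add: pt)
  qed
  also have "\<dots> = u $ Inl a0 * w $ Inr b0 * H (axis (Inl a0) 1) (axis (Inr b0) 1)" by simp
  finally show ?thesis .
qed



theorem lemma3p1:
  fixes F1 :: "real^('k::finite + 'm::finite) \<Rightarrow> real"
    and a0 :: 'k and b0 :: 'm and y1 y2 :: real
  assumes n3: "CARD('k) + CARD('m) \<ge> 3"
    and kle: "2 * CARD('k) \<le> CARD('k) + CARD('m)"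
    and mink: "minkowski_norm F1"
    and inv: "SO_invariant F1"
    and ynz: "y1 *\<^sub>R axis (Inl a0) 1 + y2 *\<^sub>R axis (Inr b0) 1 \<noteq> 0"
    and y1nn: "y1 \<ge> 0" and y2nn: "y2 \<ge> 0"
  shows
   "let e1 = axis (Inl a0) (1::real) :: real^('k + 'm);
        ek1 = axis (Inr b0) (1::real) :: real^('k + 'm);
        V' = span (range (\<lambda>a. axis (Inl a) (1::real))) :: (real^('k + 'm)) set;
        V'' = span (range (\<lambda>b. axis (Inr b) (1::real))) :: (real^('k + 'm)) set;
        f = (\<lambda>t. energy F1 (cos t *\<^sub>R e1 + sin t *\<^sub>R ek1));
        y = y1 *\<^sub>R e1 + y2 *\<^sub>R ek1;
        C1 = (\<exists>v'\<in>V'. \<exists>v''\<in>V''. hess_metric F1 y v' v'' \<noteq> 0);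
        C2 = (hess_metric F1 y e1 ek1 \<noteq> 0);
        C3 = (y2 > 0 \<and> (CARD('k) > 1 \<longrightarrow> y1 > 0) \<and>
              (\<exists>t\<in>{0<..<pi}. y1 = norm y * cos t \<and> y2 = norm y * sin t \<and>
                 - cos t * sin t * deriv (deriv f) t
                   + ((cos t)\<^sup>2 - (sin t)\<^sup>2) * deriv f t \<noteq> 0))
    in (C1 \<longrightarrow> y2 > 0 \<and> (CARD('k) > 1 \<longrightarrow> y1 > 0)) \<and>
       (C1 \<longleftrightarrow> C2) \<and> (C2 \<longleftrightarrow> C3) \<and>
       (C1 \<longrightarrow> \<not> (\<exists>U. open U \<and> y \<in> U \<and> pos_conic U \<and> euclidean_on F1 U))"
proof -
  define e1 :: "real^('k+'m)" where "e1 = axis (Inl a0) 1"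
  define e2 :: "real^('k+'m)" where "e2 = axis (Inr b0) 1"
  define V' :: "(real^('k+'m)) set" where "V' = span (range (\<lambda>a. axis (Inl a) (1::real)))"
  define V'' :: "(real^('k+'m)) set" where "V'' = span (range (\<lambda>b. axis (Inr b) (1::real)))"
  define f where "f = (\<lambda>t. energy F1 (cos t *\<^sub>R e1 + sin t *\<^sub>R e2))"
  define y where "y = y1 *\<^sub>R e1 + y2 *\<^sub>R e2"
  define H where "H = hess_metric F1 y"
  define C1 where "C1 = (\<exists>v'\<in>V'. \<exists>v''\<in>V''. H v' v'' \<noteq> 0)"
  define C2 where "C2 = (H e1 e2 \<noteq> 0)"
  define C3 where "C3 = (y2 > 0 \<and> (CARD('k) > 1 \<longrightarrow> y1 > 0) \<and>
              (\<exists>t\<in>{0<..<pi}. y1 = norm y * cos t \<and> y2 = norm y * sin t \<and>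
                 - cos t * sin t * deriv (deriv f) t
                   + ((cos t)\<^sup>2 - (sin t)\<^sup>2) * deriv f t \<noteq> 0))"
  define NE where "NE = (\<not> (\<exists>U. open U \<and> y \<in> U \<and> pos_conic U \<and> euclidean_on F1 U))"
  have ck: "CARD('k) \<ge> 1" by (simp add: Suc_leI)
  have N: "CARD('m) \<ge> 2" using n3 kle ck by linarith
  have yc: "y $ p = (if p = Inl a0 then y1 else if p = Inr b0 then y2 else 0)" for p
    by (auto simp: y_def e1_def e2_def axis_def)
  have "y1 \<noteq> 0 \<or> y2 \<noteq> 0"
  proof (rule ccontr)
    assume "\<not> (y1 \<noteq> 0 \<or> y2 \<noteq> 0)"
    then show False using ynz by simp
  qed
  then have y0: "y \<noteq> 0" using yc[of "Inl a0"] yc[of "Inr b0"] by auto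
  have hu: "linear (\<lambda>u. H u w)" for w unfolding H_def by (rule hess_linear_u[OF mink y0])
  have hw: "linear (\<lambda>w. H u w)" for u unfolding H_def by (rule hess_linear_w[OF mink y0])
  have expand: "H u w = u $ Inl a0 * w $ Inr b0 * H e1 e2"
    if "u \<in> V'" "w \<in> V''" "\<And>a b. (a, b) \<noteq> (a0, b0) \<Longrightarrow> H (axis (Inl a) 1) (axis (Inr b) 1) = 0" for u w
    unfolding e1_def e2_def
    by (rule expand_single[OF hu hw]) (use that spanL_comp spanR_comp in \<open>auto simp: V'_def V''_def\<close>)
  have Fy2: "H (axis (Inl a) 1) (axis (Inr b) 1) = 0" if y2: "y2 = 0" for a b
  proof -
    obtain b' :: 'm where b': "b' \<noteq> b" using card_other[OF N] by blast
    let ?T = "rot (Inr b) (Inr b' :: 'k + 'm) pi"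
    have rinv: "F1 (?T *v z) = F1 z" for z using inv_rot_r[OF inv b'[symmetric]] by simp
    have bb: "Inr b \<noteq> (Inr b' :: 'k + 'm)" using b' by simp
    have Ty: "?T *v y = y" using y2 b' by (simp add: vec_eq_iff rot_mulv_nth[OF bb] yc)
    have Ta: "?T *v axis (Inl a) 1 = axis (Inl a) 1" using b' by (simp add: vec_eq_iff rot_mulv_nth[OF bb] axis_def)
    have Tb: "?T *v axis (Inr b) 1 = - axis (Inr b) 1" using b' by (simp add: vec_eq_iff rot_mulv_nth[OF bb] axis_def)
    have "H (axis (Inl a) 1) (- axis (Inr b) 1) = H (axis (Inl a) 1) (axis (Inr b) 1)"
      using hess_rot[of F1 ?T y "axis (Inl a) 1" "axis (Inr b) 1", OF rinv] Ty Ta Tb by (simp add: H_def)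
    moreover have "H (axis (Inl a) 1) (- axis (Inr b) 1) = - H (axis (Inl a) 1) (axis (Inr b) 1)"
      using linear_neg[OF hw] by simp
    ultimately show ?thesis by simp
  qed
  have Fy1: "H (axis (Inl a) 1) (axis (Inr b) 1) = 0" if k1: "CARD('k) > 1" and y1: "y1 = 0" for a b
  proof -
    obtain a' :: 'k where a': "a' \<noteq> a" using card_other[of a] k1 by auto
    let ?T = "rot (Inl a) (Inl a' :: 'k + 'm) pi"
    have rinv: "F1 (?T *v z) = F1 z" for z using inv_rot_l[OF inv a'[symmetric]] by simp
    have aa: "Inl a \<noteq> (Inl a' :: 'k + 'm)" using a' by simp
    have Ty: "?T *v y = y" using y1 a' by (simp add: vec_eq_iff rot_mulv_nth[OF aa] yc)
    have Ta: "?T *v axis (Inl a) 1 = - axis (Inl a) 1" using a' by (simp add: vec_eq_iff rot_mulv_nth[OF aa] axis_def)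
    have Tb: "?T *v axis (Inr b) 1 = axis (Inr b) 1" using a' by (simp add: vec_eq_iff rot_mulv_nth[OF aa] axis_def)
    have "H (- axis (Inl a) 1) (axis (Inr b) 1) = H (axis (Inl a) 1) (axis (Inr b) 1)"
      using hess_rot[of F1 ?T y "axis (Inl a) 1" "axis (Inr b) 1", OF rinv] Ty Ta Tb by (simp add: H_def)
    moreover have "H (- axis (Inl a) 1) (axis (Inr b) 1) = - H (axis (Inl a) 1) (axis (Inr b) 1)"
      using linear_neg[OF hu] by simp
    ultimately show ?thesis by simp
  qed
  have Fa: "H (axis (Inl a) 1) (axis (Inr b) 1) = 0" if y1: "y1 > 0" and a: "a \<noteq> a0" for a b
  proof -
    have a0a: "Inl a0 \<noteq> (Inl a :: 'k + 'm)" using a by simp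
    have rinv: "\<And>\<theta> z. F1 (rot (Inl a0) (Inl a) \<theta> *v z) = F1 z" using inv_rot_l[OF inv] a by auto
    have "y $ Inl a0 * hess_metric F1 y (axis (Inl a) 1) (axis (Inr b) 1)
        - y $ Inl a * hess_metric F1 y (axis (Inl a0) 1) (axis (Inr b) 1) = 0"
      by (rule inf2[OF mink a0a rinv y0]) (auto simp: axis_def)
    then show ?thesis using y1 a by (simp add: yc H_def)
  qed
  have Fb: "H (axis (Inl a) 1) (axis (Inr b) 1) = 0" if y2: "y2 > 0" and b: "b \<noteq> b0" for a b
  proof -
    have b0b: "Inr b0 \<noteq> (Inr b :: 'k + 'm)" using b by simp
    have rinv: "\<And>\<theta> z. F1 (rot (Inr b0) (Inr b) \<theta> *v z) = F1 z" using inv_rot_r[OF inv] b by auto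
    have "y $ Inr b0 * hess_metric F1 y (axis (Inl a) 1) (axis (Inr b) 1)
        - y $ Inr b * hess_metric F1 y (axis (Inl a) 1) (axis (Inr b0) 1) = 0"
      by (rule inf3[OF mink b0b rinv y0]) (auto simp: axis_def)
    then show ?thesis using y2 b by (simp add: yc H_def)
  qed
  have C1imp: "y2 > 0 \<and> (CARD('k) > 1 \<longrightarrow> y1 > 0)" if C1 
  proof -
    obtain u w where uw: "u \<in> V'" "w \<in> V''" "H u w \<noteq> 0" using \<open>C1\<close> unfolding C1_def by blast
    have "y2 > 0"
    proof (rule ccontr)
      assume "\<not> y2 > 0"
      then have y2: "y2 = 0" using y2nn by simp
      have "H u w = u $ Inl a0 * w $ Inr b0 * H e1 e2" using expand[OF uw(1,2)] Fy2[OF y2] by blast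
      moreover have "H e1 e2 = 0" unfolding e1_def e2_def by (rule Fy2[OF y2])
      ultimately show False using uw(3) by simp
    qed
    moreover have "y1 > 0" if k1: "CARD('k) > 1"
    proof (rule ccontr)
      assume "\<not> y1 > 0"
      then have y1: "y1 = 0" using y1nn by simp
      have "H u w = u $ Inl a0 * w $ Inr b0 * H e1 e2" using expand[OF uw(1,2)] Fy1[OF k1 y1] by blast
      moreover have "H e1 e2 = 0" unfolding e1_def e2_def by (rule Fy1[OF k1 y1])
      ultimately show False using uw(3) by simp
    qed
    ultimately show ?thesis by blast
  qed
  have C2C1: "C1" if C2
  proof -
    have "e1 \<in> V'" unfolding V'_def e1_def by (rule span_base) auto
    moreover have "e2 \<in> V''" unfolding V''_def e2_def by (rule span_base) auto
    ultimately show ?thesis using \<open>C2\<close> unfolding C1_def C2_def by blast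
  qed
  have C1C2: "C2" if C1
  proof -
    obtain u w where uw: "u \<in> V'" "w \<in> V''" "H u w \<noteq> 0" using \<open>C1\<close> unfolding C1_def by blast
    have pos: "y2 > 0" "CARD('k) > 1 \<longrightarrow> y1 > 0" using C1imp[OF \<open>C1\<close>] by auto
    have zero: "H (axis (Inl a) 1) (axis (Inr b) 1) = 0" if ab: "(a, b) \<noteq> (a0, b0)" for a b
    proof (cases "a = a0")
      case False
      then show ?thesis using Fa card_two[OF False] pos by blast
    next
      case True
      then have "b \<noteq> b0" using ab by simp
      then show ?thesis using Fb pos by blast
    qed
    show ?thesis using expand[OF uw(1,2) zero] uw(3) unfolding C2_def by auto
  qed
  have key: "H e1 e2 = - cos t * sin t * deriv (deriv f) t + ((cos t)\<^sup>2 - (sin t)\<^sup>2) * deriv f t"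
    if t: "t \<in> {0<..<pi}" and ty1: "y1 = norm y * cos t" and ty2: "y2 = norm y * sin t" for t
  proof -
    have ny: "norm y > 0" using y0 by simp
    have yP: "y = norm y *\<^sub>R (cos t *\<^sub>R e1 + sin t *\<^sub>R e2)"
    proof -
      have "norm y *\<^sub>R (cos t *\<^sub>R e1 + sin t *\<^sub>R e2) = (norm y * cos t) *\<^sub>R e1 + (norm y * sin t) *\<^sub>R e2"
        by (simp add: scaleR_add_right)
      also have "\<dots> = y1 *\<^sub>R e1 + y2 *\<^sub>R e2" by (simp only: ty1[symmetric] ty2[symmetric])
      also have "\<dots> = y" by (simp only: y_def)
      finally show ?thesis by simp
    qed
    have Pnz: "cos t *\<^sub>R e1 + sin t *\<^sub>R e2 \<noteq> 0" using yP y0 by auto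
    have st: "sin t \<noteq> 0" using t sin_gt_zero by force
    have "H e1 e2 = hess_metric F1 (cos t *\<^sub>R e1 + sin t *\<^sub>R e2) e1 e2"
      unfolding H_def using hess_hom[OF mink ny Pnz] yP by metis
    also have "\<dots> = - cos t * sin t * deriv (deriv f) t + ((cos t)\<^sup>2 - (sin t)\<^sup>2) * deriv f t"
      unfolding f_def e1_def e2_def by (rule polar[OF mink _ st]) simp
    finally show ?thesis .
  qed
  have C3C2: "C2" if C3 using that key unfolding C3_def C2_def by metis
  have C2C3: "C3" if C2
  proof -
    have pos: "y2 > 0" "CARD('k) > 1 \<longrightarrow> y1 > 0" using C1imp[OF C2C1[OF \<open>C2\<close>]] by auto
    define ny where "ny = norm y"
    have yy: "y \<bullet> y = y1\<^sup>2 + y2\<^sup>2"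
      unfolding y_def e1_def e2_def by (simp add: inner_add_left inner_add_right inner_axis_axis power2_eq_square)
    have nyd: "ny = sqrt (y1\<^sup>2 + y2\<^sup>2)" unfolding ny_def norm_eq_sqrt_inner yy ..
    have ny2: "ny\<^sup>2 = y1\<^sup>2 + y2\<^sup>2" unfolding nyd by simp
    have nyp: "ny > 0" using y0 ny_def by simp
    define c where "c = y1 / ny"
    have "y1 < ny" unfolding nyd using pos(1) by (intro real_less_rsqrt) (simp add: power2_eq_square)
    then have c1: "c < 1" "c \<ge> 0" using nyp y1nn by (auto simp: c_def)
    define t where "t = arccos c"
    have tI: "t \<in> {0<..<pi}" using arccos_lt_bounded[of c] c1 by (simp add: t_def)
    have ct: "cos t = c" using c1 by (simp add: t_def)
    have "sin t = sqrt (1 - c\<^sup>2)" using c1 by (simp add: t_def sin_arccos)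
    also have "1 - c\<^sup>2 = (y2 / ny)\<^sup>2"
    proof -
      have "1 - c\<^sup>2 = (ny\<^sup>2 - y1\<^sup>2) / ny\<^sup>2" using nyp by (simp add: c_def power_divide field_simps)
      also have "\<dots> = (y2 / ny)\<^sup>2" using ny2 by (simp add: power_divide)
      finally show ?thesis .
    qed
    also have "sqrt ((y2 / ny)\<^sup>2) = y2 / ny" using pos(1) nyp by simp
    finally have stv: "sin t = y2 / ny" .
    have t1: "y1 = norm y * cos t" using ct nyp by (simp add: c_def ny_def)
    have t2: "y2 = norm y * sin t" using stv nyp by (simp add: ny_def)
    show ?thesis unfolding C3_def using pos tI t1 t2 key[OF tI t1 t2] \<open>C2\<close> unfolding C2_def by metis
  qed
  have NEp: "NE" if C1
  proof -
    have c2: "H e1 e2 \<noteq> 0" using C1C2[OF \<open>C1\<close>] unfolding C2_def .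
    have y2p: "y2 > 0" using C1imp[OF \<open>C1\<close>] by simp
    show ?thesis unfolding NE_def
    proof
      assume "\<exists>U. open U \<and> y \<in> U \<and> pos_conic U \<and> euclidean_on F1 U"
      then obtain U Q where U: "open U" "y \<in> U" and Qs: "transpose Q = Q"
        and Qp: "\<And>z. z \<noteq> 0 \<Longrightarrow> z \<bullet> (Q *v z) > 0" and FQ: "\<And>z. z \<in> U \<Longrightarrow> F1 z = sqrt (z \<bullet> (Q *v z))"
        unfolding euclidean_on_def by blast
      have EQ: "energy F1 q = q \<bullet> (Q *v q) / 2" if "q \<in> U" for q
      proof -
        have "q \<bullet> (Q *v q) \<ge> 0" using Qp[of q] by (cases "q = 0") auto
        then show ?thesis using FQ[OF that] by (simp add: energy_def)
      qed
      obtain b :: 'm where b: "b \<noteq> b0" using card_other[OF N] by blast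
      define eb :: "real^('k+'m)" where "eb = axis (Inr b) 1"
      obtain r where r: "r > 0" "ball y r \<subseteq> U" using U open_contains_ball by blast
      define z where "z = y + (r/2) *\<^sub>R eb"
      have zU: "z \<in> U" using r by (auto simp: z_def eb_def dist_norm intro!: subsetD[OF r(2)])
      have zc: "z $ Inr b0 = y2" "z $ Inr b = r/2" using b by (auto simp: z_def eb_def yc axis_def)
      have z0: "z \<noteq> 0" using zc y2p by auto
      have b0b: "Inr b0 \<noteq> (Inr b :: 'k + 'm)" using b by simp
      have rinv: "\<And>\<theta> z. F1 (rot (Inr b0) (Inr b) \<theta> *v z) = F1 z" using inv_rot_r[OF inv] b by auto
      have i1: "y $ Inr b0 * hess_metric F1 y e1 eb - y $ Inr b * hess_metric F1 y e1 e2 = 0"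
        unfolding eb_def e2_def by (rule inf3[OF mink b0b rinv y0]) (auto simp: e1_def axis_def)
      have i2: "z $ Inr b0 * hess_metric F1 z e1 eb - z $ Inr b * hess_metric F1 z e1 e2 = 0"
        unfolding eb_def e2_def by (rule inf3[OF mink b0b rinv z0]) (auto simp: e1_def axis_def)
      have qy: "hess_metric F1 y e1 w = w \<bullet> (Q *v e1)" for w by (rule quad_hess[OF U Qs EQ])
      have qz: "hess_metric F1 z e1 w = w \<bullet> (Q *v e1)" for w by (rule quad_hess[OF U(1) zU Qs EQ])
      have "eb \<bullet> (Q *v e1) = 0" using i1 qy y2p b by (simp add: yc)
      then have "e2 \<bullet> (Q *v e1) = 0" using i2 qz zc r(1) by simp
      then show False using c2 qy unfolding H_def by simp
    qed
  qed
  have goal: "(C1 \<longrightarrow> y2 > 0 \<and> (CARD('k) > 1 \<longrightarrow> y1 > 0)) \<and> (C1 \<longleftrightarrow> C2) \<and> (C2 \<longleftrightarrow> C3) \<and> (C1 \<longrightarrow> NE)"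
    using C1imp C1C2 C2C1 C2C3 C3C2 NEp by blast
  show ?thesis
    unfolding Let_def
    using goal unfolding C1_def C2_def C3_def NE_def H_def f_def y_def V'_def V''_def e1_def e2_def .
qed


end
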